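(* Let $p_1,\dots,p_n\ge0$ with $\sum_ip_i=1$, integers $1\le d_1<d_2<\dots<d_n$ with $\sum_ip_id_i>1$, and let $j=\min\{i:p_i>0\}$. For $\lambda\in(0,1)$ let $\bar F_\lambda$ solve $\bar F'(w)=\lambda\sum_ip_i\bar F(w)^{d_i}-\bar F(w)$, $\bar F(0)=\lambda$, let $\mathbb E[W_\lambda]=\sum_ip_i\int_0^\infty\bar F_\lambda(w)^{d_i}dw$ and $p_\lambda=1-\sum_ip_i\lambda^{d_i}$. Then $$\lim_{\lambda\to0^+}-\frac{\mathbb E[W_\lambda]}{\log(p_\lambda)}=\frac1{d_j}\qquad\text{and}\qquad\lim_{\lambda\to1^-}-\frac{\mathbb E[W_\lambda]}{\log(p_\lambda)}=\frac1{\sum_ip_id_i-1}.$$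
   Context: This is the LL($d_1,\dots,d_n,p_1,\dots,p_n$) policy with exponential(1) job sizes; $p_\lambda$ is the probability that a job is assigned to an idle server. *)

theory Defs
  imports "HOL-Analysis.Analysis"
begin

text \<open>Indices are 0-based: i ranges over {..<n}.\<close>

definition mean_wait :: "nat \<Rightarrow> (nat \<Rightarrow> real) \<Rightarrow> (nat \<Rightarrow> nat) \<Rightarrow> (real \<Rightarrow> real) \<Rightarrow> real" where
  "mean_wait n p d Fbar = (\<Sum>i<n. p i * (LINT w:{0..}|lborel. Fbar w ^ d i))"

definition p_idle :: "nat \<Rightarrow> (nat \<Rightarrow> real) \<Rightarrow> (nat \<Rightarrow> nat) \<Rightarrow> real \<Rightarrow> real" where
  "p_idle n p d l = 1 - (\<Sum>i<n. p i * l ^ d i)"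

definition first_pos :: "nat \<Rightarrow> (nat \<Rightarrow> real) \<Rightarrow> nat" where
  "first_pos n p = Min {i. i < n \<and> p i > 0}"

end

theory Submission
  imports Defs
begin


lemma ftc0:
  fixes \<Phi> \<phi> :: "real \<Rightarrow> real"
  assumes D: "\<And>x. 0 < x \<Longrightarrow> (\<Phi> has_real_derivative \<phi> x) (at x)"
    and c: "\<And>x. 0 < x \<Longrightarrow> isCont \<phi> x"
    and nn: "\<And>x. 0 < x \<Longrightarrow> 0 \<le> \<phi> x"
    and c0: "(\<Phi> \<longlongrightarrow> \<Phi> 0) (at_right 0)"
    and L: "(\<Phi> \<longlongrightarrow> L) at_top"
  shows "set_integrable lborel {0..} \<phi> \<and> (LINT x:{0..}|lborel. \<phi> x) = L - \<Phi> 0"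
proof -
  have e: "einterval (ereal 0) \<infinity> = {0<..}" by (auto simp: einterval_def)
  have r: "set_integrable lborel (einterval (ereal 0) \<infinity>) \<phi>"
       "(LBINT x=ereal 0..\<infinity>. \<phi> x) = L - \<Phi> 0"
    by (rule interval_integral_FTC_nonneg[where F=\<Phi>]; 
        (auto simp: ereal_tendsto_simps intro!: D c nn c0 L)?)+
  have X: "countable {0::real}" by simp
  have ii: "set_integrable lborel {0<..} \<phi>" using r e by simp
  have eqf: "\<And>x. x \<notin> {0} \<Longrightarrow> indicator {0<..} x *\<^sub>R \<phi> x = indicator {0..} x *\<^sub>R \<phi> x"
    by (auto simp: indicator_def)
  have i2: "set_integrable lborel {0..} \<phi>"
    using ii unfolding set_integrable_def
    by (subst integrable_discrete_difference[where X="{0}" and g="\<lambda>x. indicator {0<..} x *\<^sub>R \<phi> x"]) (auto simp: indicator_def)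
  have "(LINT x:{0..}|lborel. \<phi> x) = (LINT x:{0<..}|lborel. \<phi> x)"
    unfolding set_lebesgue_integral_def
    by (rule integral_discrete_difference[where X="{0}"]) (auto simp: indicator_def)
  also have "\<dots> = L - \<Phi> 0" using r(2) by (simp add: interval_integral_Ioi)
  finally show ?thesis using i2 by simp
qed



locale LL =
  fixes n :: nat and p :: "nat \<Rightarrow> real" and d :: "nat \<Rightarrow> nat" and l :: real and F :: "real \<Rightarrow> real"
  assumes p_nonneg: "\<And>i. i < n \<Longrightarrow> p i \<ge> 0"
    and p_sum: "(\<Sum>i<n. p i) = 1"
    and d_pos: "\<And>i. i < n \<Longrightarrow> d i \<ge> 1"
    and l0: "0 < l" and l1: "l < 1"
    and F0: "F 0 = l"
    and ode: "\<And>w. 0 \<le> w \<Longrightarrow> (F has_real_derivative (l * (\<Sum>i<n. p i * F w ^ d i) - F w)) (at w within {0..})"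
begin

definition Sx :: "real \<Rightarrow> real" where "Sx x = (\<Sum>i<n. p i * x ^ d i)"

lemma Sx_bounds: assumes "0 \<le> x" "x \<le> 1" shows "0 \<le> Sx x" "Sx x \<le> x"
proof -
  show "0 \<le> Sx x" unfolding Sx_def using assms p_nonneg by (auto intro!: sum_nonneg)
  have "Sx x \<le> (\<Sum>i<n. p i * x)" unfolding Sx_def
  proof (rule sum_mono)
    fix i assume "i \<in> {..<n}"
    then have "x ^ d i \<le> x ^ 1" using assms d_pos by (intro power_decreasing) auto
    then show "p i * x ^ d i \<le> p i * x" using p_nonneg \<open>i \<in> {..<n}\<close> by (auto intro: mult_left_mono)
  qed
  also have "\<dots> = x" using p_sum by (simp add: sum_distrib_right[symmetric])
  finally show "Sx x \<le> x" .
qed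

lemma ode': "0 \<le> w \<Longrightarrow> (F has_real_derivative (l * Sx (F w) - F w)) (at w within {0..})"
  unfolding Sx_def by (rule ode)

lemma Fcont: "continuous_on {0..} F"
  unfolding continuous_on_eq_continuous_within
proof
  fix x :: real assume "x \<in> {0..}"
  then have "0 \<le> x" by simp
  then show "continuous (at x within {0..}) F" by (rule DERIV_continuous[OF ode'])
qed

lemma Fder: assumes "0 < w" shows "(F has_real_derivative (l * Sx (F w) - F w)) (at w)"
proof -
  have "(F has_real_derivative (l * Sx (F w) - F w)) (at w within {0<..})"
    by (rule has_field_derivative_subset[OF ode'[of w]]) (use assms in auto)
  moreover have "at w within {0<..} = at w" using assms by (intro at_within_open) auto
  ultimately show ?thesis by simp
qed

lemma g1: assumes "0 \<le> w" "\<And>v. 0 \<le> v \<Longrightarrow> v \<le> w \<Longrightarrow> 0 \<le> F v \<and> F v \<le> 1"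
  shows "l \<le> exp w * F w"
proof -
  have "exp 0 * F 0 \<le> exp w * F w"
  proof (rule DERIV_nonneg_imp_increasing_open[OF assms(1)])
    fix x assume x: "0 < x" "x < w"
    have "((\<lambda>x. exp x * F x) has_real_derivative exp x * F x + exp x * (l * Sx (F x) - F x)) (at x)"
      using Fder[OF x(1)] by (auto intro!: derivative_eq_intros)
    moreover have "exp x * F x + exp x * (l * Sx (F x) - F x) = exp x * l * Sx (F x)" by (simp add: algebra_simps)
    moreover have "0 \<le> exp x * l * Sx (F x)" using Sx_bounds(1)[of "F x"] assms(2)[of x] x l0 by auto
    ultimately show "\<exists>y. ((\<lambda>x. exp x * F x) has_real_derivative y) (at x) \<and> 0 \<le> y" by metis
  next
    show "continuous_on {0..w} (\<lambda>x. exp x * F x)"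
      using Fcont by (auto intro!: continuous_intros elim: continuous_on_subset)
  qed
  then show ?thesis using F0 by simp
qed

lemma g2: assumes "0 \<le> w" "\<And>v. 0 \<le> v \<Longrightarrow> v \<le> w \<Longrightarrow> 0 \<le> F v \<and> F v \<le> 1"
  shows "exp ((1-l)*w) * F w \<le> l"
proof -
  have "- (exp ((1-l)*0) * F 0) \<le> - (exp ((1-l)*w) * F w)"
  proof (rule DERIV_nonneg_imp_increasing_open[OF assms(1)])
    fix x assume x: "0 < x" "x < w"
    have "((\<lambda>x. - (exp ((1-l)*x) * F x)) has_real_derivative 
       - (exp ((1-l)*x) * (1-l) * F x + exp ((1-l)*x) * (l * Sx (F x) - F x))) (at x)"
      using Fder[OF x(1)] by (auto intro!: derivative_eq_intros)
    moreover have "- (exp ((1-l)*x) * (1-l) * F x + exp ((1-l)*x) * (l * Sx (F x) - F x)) = exp ((1-l)*x) * l * (F x - Sx (F x))" by (simp add: algebra_simps)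
    moreover have "0 \<le> exp ((1-l)*x) * l * (F x - Sx (F x))" using Sx_bounds(2)[of "F x"] assms(2)[of x] x l0 by auto
    ultimately show "\<exists>y. ((\<lambda>x. - (exp ((1-l)*x) * F x)) has_real_derivative y) (at x) \<and> 0 \<le> y" by metis
  next
    show "continuous_on {0..w} (\<lambda>x. - (exp ((1-l)*x) * F x))"
      using Fcont by (auto intro!: continuous_intros elim: continuous_on_subset)
  qed
  then show ?thesis using F0 by simp
qed

lemma F_in01: assumes "0 \<le> w1" shows "0 < F w1 \<and> F w1 < 1"
proof (rule ccontr)
  assume nc: "\<not> (0 < F w1 \<and> F w1 < 1)"
  define B where "B = {0..w1} \<inter> F -` ({..0} \<union> {1..})"
  have cB: "closed B" unfolding B_def
    by (rule continuous_closed_preimage) (auto intro: continuous_on_subset[OF Fcont])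
  have neB: "B \<noteq> {}" using nc assms unfolding B_def by auto
  define w0 where "w0 = Inf B"
  have bdd: "bdd_below B" unfolding B_def by (auto intro: bdd_belowI[of _ 0])
  have w0B: "w0 \<in> B" unfolding w0_def using cB neB bdd closed_contains_Inf by blast
  have le: "\<And>v. v \<in> B \<Longrightarrow> w0 \<le> v" unfolding w0_def using bdd by (auto intro: cInf_lower)
  have w0r: "0 \<le> w0" "w0 \<le> w1" using w0B unfolding B_def by auto
  have lt: "\<And>v. 0 \<le> v \<Longrightarrow> v < w0 \<Longrightarrow> 0 < F v \<and> F v < 1"
  proof -
    fix v assume v: "0 \<le> v" "v < w0"
    then have "v \<notin> B" using le by force
    then show "0 < F v \<and> F v < 1" using v w0r unfolding B_def by auto
  qed
  have w0pos: "w0 \<noteq> 0" using w0B F0 l0 l1 unfolding B_def by auto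
  have cw: "continuous_on {0..w0} F" using Fcont by (auto elim: continuous_on_subset)
  have Fw0: "F w0 = 0 \<or> F w0 = 1"
  proof (cases "F w0 \<le> 0")
    case True
    have "\<exists>x. 0 \<le> x \<and> x \<le> w0 \<and> F x = 0" by (rule IVT2'[of F w0 0 0]) (use True F0 l0 w0r cw in auto)
    then obtain x where x: "0 \<le> x" "x \<le> w0" "F x = 0" by auto
    then have "x \<in> B" using w0r unfolding B_def by auto
    then show ?thesis using le[of x] x by auto
  next
    case False
    then have g: "1 \<le> F w0" using w0B unfolding B_def by auto
    have "\<exists>x. 0 \<le> x \<and> x \<le> w0 \<and> F x = 1" by (rule IVT'[of F 0 1 w0]) (use g F0 l1 w0r cw in auto)
    then obtain x where x: "0 \<le> x" "x \<le> w0" "F x = 1" by auto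
    then have "x \<in> B" using w0r unfolding B_def by auto
    then show ?thesis using le[of x] x by auto
  qed
  have all: "\<And>v. 0 \<le> v \<Longrightarrow> v \<le> w0 \<Longrightarrow> 0 \<le> F v \<and> F v \<le> 1"
    using lt Fw0 by (case_tac "v = w0") force+
  have a1: "l \<le> exp w0 * F w0" by (rule g1[OF w0r(1) all])
  have a2: "exp ((1-l)*w0) * F w0 \<le> l" by (rule g2[OF w0r(1) all])
  have "F w0 = 1" using a1 Fw0 l0 by auto
  then have "exp ((1-l)*w0) \<le> l" using a2 by simp
  moreover have "1 \<le> exp ((1-l)*w0)" using l1 w0r by auto
  ultimately show False using l1 by linarith
qed

lemma F_upper: assumes "0 \<le> w" shows "F w \<le> l * exp (-((1-l)*w))"
proof -
  have "exp ((1-l)*w) * F w \<le> l" using g2[OF assms] F_in01 by (simp add: less_imp_le)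
  have "F w = inverse (exp ((1-l)*w)) * (exp ((1-l)*w) * F w)" by simp
  also have "\<dots> \<le> inverse (exp ((1-l)*w)) * l" by (rule mult_left_mono) (use \<open>exp ((1-l)*w) * F w \<le> l\<close> in auto)
  also have "\<dots> = l * exp (-((1-l)*w))" by (simp add: exp_minus)
  finally show ?thesis .
qed

lemma F_lim: "(F \<longlongrightarrow> 0) at_top"
proof (rule tendsto_sandwich[where f="\<lambda>_. 0" and h="\<lambda>w. l * exp (-((1-l)*w))"])
  show "eventually (\<lambda>w. 0 \<le> F w) at_top" using F_in01 by (auto intro!: eventually_at_top_linorderI[of 0] less_imp_le)
  show "eventually (\<lambda>w. F w \<le> l * exp (-((1-l)*w))) at_top" using F_upper by (auto intro!: eventually_at_top_linorderI[of 0])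
  have "filterlim (\<lambda>w. (1-l)*w) at_top at_top"
    using l1 by (intro filterlim_tendsto_pos_mult_at_top[OF tendsto_const] filterlim_ident) auto
  then have "filterlim (\<lambda>w. -((1-l)*w)) at_bot at_top"
    by (simp add: filterlim_uminus_at_top)
  then have "((\<lambda>w. exp (-((1-l)*w))) \<longlongrightarrow> 0) at_top"
    by (rule exp_at_bot[THEN filterlim_compose])
  then show "((\<lambda>w. l * exp (-((1-l)*w))) \<longlongrightarrow> 0) at_top" by (rule tendsto_mult_right_zero)
qed simp

end


lemma pow_x_bound: fixes x :: real assumes "0 \<le> x" "x \<le> 1" "1 \<le> k"
  shows "0 \<le> x - x ^ k" "x - x ^ k \<le> real k * x * (1 - x)"
proof -
  have "x ^ k \<le> x ^ 1" using assms by (intro power_decreasing) auto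
  then show "0 \<le> x - x ^ k" by simp
  have b: "1 + real (k - 1) * (x - 1) \<le> (1 + (x - 1)) ^ (k - 1)"
    using assms by (intro Bernoulli_inequality) auto
  have k: "x ^ k = x * x ^ (k - 1)" using assms by (metis Suc_diff_le diff_Suc_1 power_Suc)
  have "x - x ^ k = x * (1 - x ^ (k - 1))" using k by (simp add: algebra_simps)
  also have "\<dots> \<le> x * (real (k - 1) * (1 - x))"
    using b assms by (intro mult_left_mono) (auto simp: algebra_simps)
  also have "\<dots> \<le> x * (real k * (1 - x))"
    using assms by (intro mult_left_mono mult_right_mono) auto
  finally show "x - x ^ k \<le> real k * x * (1 - x)" by (simp add: algebra_simps)
qed

context LL begin

definition Hx :: "real \<Rightarrow> real" where "Hx x = (\<Sum>i<n. p i * x ^ (d i - 1))"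
definition Hd :: "real \<Rightarrow> real" where "Hd x = (\<Sum>i<n. p i * (of_nat (d i - 1) * x ^ (d i - 1 - Suc 0)))"
definition Px :: "real \<Rightarrow> real" where "Px x = (\<Sum>i<n. p i * (real (d i - 1) * x ^ (d i - 1)))"
definition Ax :: "real \<Rightarrow> real" where "Ax x = (\<Sum>i<n. p i * x ^ d i / real (d i))"

lemma xH: "x * Hx x = Sx x"
  unfolding Hx_def Sx_def sum_distrib_left
proof (rule sum.cong[OF refl])
  fix i assume "i \<in> {..<n}"
  then have "d i = Suc (d i - 1)" using d_pos by (metis Suc_diff_le diff_Suc_1 lessThan_iff)
  then have "x ^ d i = x * x ^ (d i - 1)" by (metis power_Suc)
  then show "x * (p i * x ^ (d i - 1)) = p i * x ^ d i" by simp
qed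

lemma xHd: "x * Hd x = Px x"
  unfolding Hd_def Px_def sum_distrib_left
proof (rule sum.cong[OF refl])
  fix i assume "i \<in> {..<n}"
  show "x * (p i * (of_nat (d i - 1) * x ^ (d i - 1 - Suc 0))) = p i * (real (d i - 1) * x ^ (d i - 1))"
  proof (cases "d i - 1 = 0")
    case False
    then have "d i - 1 = Suc (d i - 1 - Suc 0)" by simp
    then have "x ^ (d i - 1) = x * x ^ (d i - 1 - Suc 0)" by (metis power_Suc)
    then show ?thesis by simp
  qed simp
qed

lemma Hx_bounds: assumes "0 \<le> x" "x \<le> 1" shows "0 \<le> Hx x" "Hx x \<le> 1"
proof -
  show "0 \<le> Hx x" unfolding Hx_def using assms p_nonneg by (auto intro!: sum_nonneg)
  have "Hx x \<le> (\<Sum>i<n. p i * 1)" unfolding Hx_def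
  proof (rule sum_mono)
    fix i assume "i \<in> {..<n}"
    then have "x ^ (d i - 1) \<le> 1" using assms by (intro power_le_one) auto
    then show "p i * x ^ (d i - 1) \<le> p i * 1" using p_nonneg[of i] \<open>i \<in> {..<n}\<close> by (intro mult_left_mono) auto
  qed
  then show "Hx x \<le> 1" using p_sum by simp
qed

lemma Fw: "0 \<le> w \<Longrightarrow> 0 < F w \<and> F w < 1" using F_in01 by simp

lemma Dform: "l * Sx (F w) - F w = - (F w * (1 - l * Hx (F w)))"
  using xH[of "F w"] by (simp add: algebra_simps)

lemma Fcont_at: "0 < w \<Longrightarrow> isCont F w"
  using Fder DERIV_isCont by blast

lemma Sx_cont: "continuous_on A Sx"
  unfolding Sx_def by (intro continuous_intros)
lemma Hx_cont: "continuous_on A Hx"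
  unfolding Hx_def by (intro continuous_intros)
lemma Px_cont: "continuous_on A Px"
  unfolding Px_def by (intro continuous_intros)
lemma Ax_cont: "continuous_on A Ax"
  unfolding Ax_def using d_pos by (intro continuous_intros) (force simp: Suc_le_eq)

end


context LL begin

lemma Gprops: fixes G :: "real \<Rightarrow> real" assumes G: "continuous_on UNIV G"
  shows "\<And>x. 0 < x \<Longrightarrow> isCont (\<lambda>w. G (F w)) x"
    and "((\<lambda>w. G (F w)) \<longlongrightarrow> G l) (at_right 0)"
    and "((\<lambda>w. G (F w)) \<longlongrightarrow> G 0) at_top"
    and "continuous_on {0..} (\<lambda>w. G (F w))"
    and "set_borel_measurable lborel {0..} (\<lambda>w. G (F w))"
proof -
  have Gc: "\<And>y. isCont G y" using G by (simp add: continuous_on_eq_continuous_at)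
  show "\<And>x. 0 < x \<Longrightarrow> isCont (\<lambda>w. G (F w)) x"
    using Fcont_at Gc by (auto intro: isCont_o2)
  have "(F \<longlongrightarrow> F 0) (at 0 within {0..})" using Fcont by (simp add: continuous_on_def)
  then have "(F \<longlongrightarrow> l) (at_right 0)" using F0 by (rule_tac tendsto_within_subset) auto
  then show "((\<lambda>w. G (F w)) \<longlongrightarrow> G l) (at_right 0)" by (rule isCont_tendsto_compose[OF Gc])
  show "((\<lambda>w. G (F w)) \<longlongrightarrow> G 0) at_top" by (rule isCont_tendsto_compose[OF Gc F_lim])
  show c: "continuous_on {0..} (\<lambda>w. G (F w))"
    by (rule continuous_on_compose2[OF G Fcont]) auto
  show "set_borel_measurable lborel {0..} (\<lambda>w. G (F w))"
    unfolding set_borel_measurable_def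
    using borel_measurable_continuous_on_indicator[OF _ c] by simp
qed

lemma Sx_contU: "continuous_on UNIV Sx" by (rule Sx_cont)

lemma I1: "set_integrable lborel {0..} (\<lambda>w. F w - l * Sx (F w)) \<and>
           (LINT w:{0..}|lborel. F w - l * Sx (F w)) = l"
proof -
  have G: "continuous_on UNIV (\<lambda>x. x - l * Sx x)" by (intro continuous_intros Sx_cont)
  have G2: "continuous_on UNIV (\<lambda>x::real. - x)" by (auto intro!: continuous_intros)
  have "set_integrable lborel {0..} (\<lambda>w. F w - l * Sx (F w)) \<and>
           (LINT w:{0..}|lborel. F w - l * Sx (F w)) = 0 - (- F 0)"
  proof (rule ftc0)
    fix x :: real assume x: "0 < x"
    show "((\<lambda>w. - F w) has_real_derivative F x - l * Sx (F x)) (at x)"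
      using DERIV_minus[OF Fder[OF x]] by simp
    show "isCont (\<lambda>w. F w - l * Sx (F w)) x" using Gprops(1)[OF G x] by simp
    have "Sx (F x) \<le> F x" "0 \<le> Sx (F x)" using Sx_bounds Fw[of x] x by auto
    then show "0 \<le> F x - l * Sx (F x)" using l0 l1
      by (smt (verit, best) mult_le_cancel_right1 mult_left_le_one_le)
  next
    show "((\<lambda>w. - F w) \<longlongrightarrow> - F 0) (at_right 0)" using Gprops(2)[OF G2] F0 by simp
    show "((\<lambda>w. - F w) \<longlongrightarrow> 0) at_top" using Gprops(3)[OF G2] by simp
  qed
  then show ?thesis using F0 by simp
qed

lemma Ax_der: assumes w: "0 < w"
  shows "((\<lambda>w. Ax (F w)) has_real_derivative (l * Sx (F w) - F w) * Hx (F w)) (at w)"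
proof -
  let ?D = "l * Sx (F w) - F w"
  have "((\<lambda>w. \<Sum>i<n. p i * F w ^ d i / real (d i)) has_real_derivative
     (\<Sum>i<n. p i * (of_nat (d i) * (?D * F w ^ (d i - Suc 0))) / real (d i))) (at w)"
    by (intro DERIV_sum DERIV_cdivide DERIV_cmult DERIV_power Fder[OF w])
  moreover have "(\<Sum>i<n. p i * (of_nat (d i) * (?D * F w ^ (d i - Suc 0))) / real (d i)) = ?D * Hx (F w)"
    unfolding Hx_def sum_distrib_left
  proof (rule sum.cong[OF refl])
    fix i assume "i \<in> {..<n}"
    then have "real (d i) \<noteq> 0" using d_pos[of i] by auto
    then show "p i * (of_nat (d i) * (?D * F w ^ (d i - Suc 0))) / real (d i) = ?D * (p i * F w ^ (d i - 1))"
      by (simp add: field_simps)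
  qed
  ultimately show ?thesis unfolding Ax_def by simp
qed

lemma Hx_der: assumes w: "0 < w"
  shows "((\<lambda>w. Hx (F w)) has_real_derivative (l * Sx (F w) - F w) * Hd (F w)) (at w)"
proof -
  let ?D = "l * Sx (F w) - F w"
  have "((\<lambda>w. \<Sum>i<n. p i * F w ^ (d i - 1)) has_real_derivative
     (\<Sum>i<n. p i * (of_nat (d i - 1) * (?D * F w ^ (d i - 1 - Suc 0))))) (at w)"
    by (intro DERIV_sum DERIV_cmult DERIV_power Fder[OF w])
  moreover have "(\<Sum>i<n. p i * (of_nat (d i - 1) * (?D * F w ^ (d i - 1 - Suc 0)))) = ?D * Hd (F w)"
    unfolding Hd_def sum_distrib_left by (rule sum.cong[OF refl]) (simp add: algebra_simps)
  ultimately show ?thesis unfolding Hx_def by simp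
qed

lemma Ax0: "Ax 0 = 0"
  unfolding Ax_def using d_pos by (intro sum.neutral) (force simp: Suc_le_eq)

lemma I2: "set_integrable lborel {0..} (\<lambda>w. Sx (F w) * (1 - l * Hx (F w))) \<and>
           (LINT w:{0..}|lborel. Sx (F w) * (1 - l * Hx (F w))) = Ax l"
proof -
  have G: "continuous_on UNIV (\<lambda>x. Sx x * (1 - l * Hx x))" by (intro continuous_intros Sx_cont Hx_cont)
  have G2: "continuous_on UNIV (\<lambda>x. - Ax x)" by (intro continuous_intros Ax_cont)
  have "set_integrable lborel {0..} (\<lambda>w. Sx (F w) * (1 - l * Hx (F w))) \<and>
           (LINT w:{0..}|lborel. Sx (F w) * (1 - l * Hx (F w))) = - Ax 0 - (- Ax (F 0))"
  proof (rule ftc0)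
    fix x :: real assume x: "0 < x"
    have "((\<lambda>w. - Ax (F w)) has_real_derivative - ((l * Sx (F x) - F x) * Hx (F x))) (at x)"
      using DERIV_minus[OF Ax_der[OF x]] by simp
    moreover have "- ((l * Sx (F x) - F x) * Hx (F x)) = Sx (F x) * (1 - l * Hx (F x))"
      unfolding xH[of "F x", symmetric] by (simp add: algebra_simps)
    ultimately show "((\<lambda>w. - Ax (F w)) has_real_derivative Sx (F x) * (1 - l * Hx (F x))) (at x)" by simp
    show "isCont (\<lambda>w. Sx (F w) * (1 - l * Hx (F w))) x" using Gprops(1)[OF G x] by simp
    have "0 \<le> Sx (F x)" "Hx (F x) \<le> 1" "0 \<le> Hx (F x)" using Sx_bounds Hx_bounds Fw[of x] x by auto
    moreover have "l * Hx (F x) \<le> 1" using calculation l0 l1 by (intro mult_le_one) auto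
    ultimately show "0 \<le> Sx (F x) * (1 - l * Hx (F x))" by simp
  next
    show "((\<lambda>w. - Ax (F w)) \<longlongrightarrow> - Ax (F 0)) (at_right 0)" using Gprops(2)[OF G2] F0 by simp
    show "((\<lambda>w. - Ax (F w)) \<longlongrightarrow> - Ax 0) at_top" using Gprops(3)[OF G2] by simp
  qed
  then show ?thesis using F0 Ax0 by simp
qed

lemma I3: "set_integrable lborel {0..} (\<lambda>w. l * Px (F w)) \<and>
           (LINT w:{0..}|lborel. l * Px (F w)) = ln (1 - l * Hx 0) - ln (1 - Sx l)"
proof -
  have G: "continuous_on UNIV (\<lambda>x. l * Px x)" by (intro continuous_intros Px_cont)
  have G2: "continuous_on UNIV (\<lambda>x. 1 - l * Hx x)" by (intro continuous_intros Hx_cont)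
  have pos: "\<And>x. 0 \<le> x \<Longrightarrow> x \<le> 1 \<Longrightarrow> 0 < 1 - l * Hx x"
  proof -
    fix x :: real assume "0 \<le> x" "x \<le> 1"
    then have "Hx x \<le> 1" "0 \<le> Hx x" using Hx_bounds by auto
    then have "l * Hx x \<le> l * 1" using l0 by (intro mult_left_mono) auto
    then show "0 < 1 - l * Hx x" using l1 by simp
  qed
  have "set_integrable lborel {0..} (\<lambda>w. l * Px (F w)) \<and>
           (LINT w:{0..}|lborel. l * Px (F w)) = ln (1 - l * Hx 0) - ln (1 - l * Hx (F 0))"
  proof (rule ftc0)
    fix x :: real assume x: "0 < x"
    have q: "0 < 1 - l * Hx (F x)" using pos Fw[of x] x by auto
    have "((\<lambda>w. 1 - l * Hx (F w)) has_real_derivative 0 - l * ((l * Sx (F x) - F x) * Hd (F x))) (at x)"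
      by (intro DERIV_diff DERIV_const DERIV_cmult Hx_der x)
    from DERIV_chain2[OF DERIV_ln[OF q] this]
    have "((\<lambda>w. ln (1 - l * Hx (F w))) has_real_derivative
        inverse (1 - l * Hx (F x)) * (0 - l * ((l * Sx (F x) - F x) * Hd (F x)))) (at x)" .
    moreover have "inverse (1 - l * Hx (F x)) * (0 - l * ((l * Sx (F x) - F x) * Hd (F x))) = l * Px (F x)"
    proof -
      have "inverse (1 - l * Hx (F x)) * (0 - l * ((l * Sx (F x) - F x) * Hd (F x)))
          = inverse (1 - l * Hx (F x)) * (1 - l * Hx (F x)) * (l * (F x * Hd (F x)))"
        unfolding Dform by (simp add: algebra_simps)
      also have "\<dots> = l * Px (F x)" using q xHd[of "F x"] by simp
      finally show ?thesis .
    qed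
    ultimately show "((\<lambda>w. ln (1 - l * Hx (F w))) has_real_derivative l * Px (F x)) (at x)" by simp
    show "isCont (\<lambda>w. l * Px (F w)) x" using Gprops(1)[OF G x] by simp
    show "0 \<le> l * Px (F x)" unfolding Px_def using l0 Fw[of x] x p_nonneg
      by (intro mult_nonneg_nonneg sum_nonneg) auto
  next
    have "isCont ln (1 - l * Hx (F 0))" using pos[of "F 0"] F0 l0 l1 by (intro isCont_ln) auto
    then show "((\<lambda>w. ln (1 - l * Hx (F w))) \<longlongrightarrow> ln (1 - l * Hx (F 0))) (at_right 0)"
      using Gprops(2)[OF G2] F0 by (rule_tac isCont_tendsto_compose) auto
    have "isCont ln (1 - l * Hx 0)" using pos[of 0] by (intro isCont_ln) auto
    then show "((\<lambda>w. ln (1 - l * Hx (F w))) \<longlongrightarrow> ln (1 - l * Hx 0)) at_top"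
      using Gprops(3)[OF G2] by (rule_tac isCont_tendsto_compose) auto
  qed
  moreover have "l * Hx l = Sx l" using xH by simp
  ultimately show ?thesis using F0 by simp
qed

end


lemma term_bound: fixes x c :: real
  assumes x: "0 \<le> x" "x \<le> 1" and d: "1 \<le> d" and c: "0 \<le> c" and c1: "d = 1 \<Longrightarrow> c = 0"
  shows "\<bar>(x ^ d - x) - c * (x ^ (d - 1) - x)\<bar> \<le> (real d + c * real d) * x * (1 - x)"
proof -
  have a: "\<bar>x ^ d - x\<bar> \<le> real d * x * (1 - x)" using pow_x_bound[OF x d] by linarith
  have b: "\<bar>c * (x ^ (d - 1) - x)\<bar> \<le> c * real d * x * (1 - x)"
  proof (cases "d = 1")
    case True then show ?thesis using c1 by simp
  next
    case False
    then have d2: "1 \<le> d - 1" using d by auto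
    have "\<bar>x ^ (d - 1) - x\<bar> \<le> real (d - 1) * x * (1 - x)" using pow_x_bound[OF x d2] by linarith
    also have "\<dots> \<le> real d * x * (1 - x)" using x by (intro mult_right_mono) auto
    finally have "\<bar>x ^ (d - 1) - x\<bar> \<le> real d * x * (1 - x)" .
    then have "c * \<bar>x ^ (d - 1) - x\<bar> \<le> c * (real d * x * (1 - x))" using c by (rule mult_left_mono)
    then show ?thesis using c by (simp add: abs_mult mult.assoc)
  qed
  have "\<bar>(x ^ d - x) - c * (x ^ (d - 1) - x)\<bar> \<le> \<bar>x ^ d - x\<bar> + \<bar>c * (x ^ (d - 1) - x)\<bar>" by (rule abs_triangle_ineq4)
  also have "\<dots> \<le> (real d + c * real d) * x * (1 - x)" using a b by (simp add: algebra_simps)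
  finally show ?thesis .
qed

lemma kappa_term: fixes x :: real assumes x: "0 \<le> x" "x \<le> 1" and d: "1 \<le> d"
  shows "(1 - 0 ^ (d - 1)) * (x * (1 - x)) \<le> x - x ^ d"
proof (cases "d = 1")
  case True then show ?thesis by simp
next
  case False
  then have a: "x ^ d \<le> x ^ 2" using x d by (intro power_decreasing) auto
  have z: "0 ^ (d - 1) = (0::real)" using False d by (simp add: power_0_left)
  show ?thesis unfolding z using a by (simp add: power2_eq_square algebra_simps)
qed

definition mm :: "nat \<Rightarrow> (nat \<Rightarrow> real) \<Rightarrow> (nat \<Rightarrow> nat) \<Rightarrow> real" where
  "mm n p d = (\<Sum>i<n. p i * real (d i))"
definition kap :: "nat \<Rightarrow> (nat \<Rightarrow> real) \<Rightarrow> (nat \<Rightarrow> nat) \<Rightarrow> real" where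
  "kap n p d = (\<Sum>i<n. p i * (1 - 0 ^ (d i - 1)))"
definition KK :: "nat \<Rightarrow> (nat \<Rightarrow> real) \<Rightarrow> (nat \<Rightarrow> nat) \<Rightarrow> real" where
  "KK n p d = (\<Sum>i<n. p i * (real (d i) + real (d i - 1) / (mm n p d - 1) * real (d i)))"

context LL begin

lemma Fk_int: assumes k: "1 \<le> k" shows "set_integrable lborel {0..} (\<lambda>w. F w ^ k)"
proof (rule set_integrable_bound)
  show "set_integrable lborel {0..} (\<lambda>w. (1/(1-l)) * (F w - l * Sx (F w)))"
    using I1 by simp
  have G: "continuous_on UNIV (\<lambda>x::real. x ^ k)" by (intro continuous_intros)
  show "set_borel_measurable lborel {0..} (\<lambda>w. F w ^ k)" using Gprops(5)[OF G] by simp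
  show "AE x in lborel. x \<in> {0..} \<longrightarrow> norm (F x ^ k) \<le> norm ((1/(1-l)) * (F x - l * Sx (F x)))"
  proof (rule AE_I2, rule impI)
    fix x :: real assume "x \<in> {0..}"
    then have f: "0 < F x" "F x < 1" using Fw by auto
    have a: "F x ^ k \<le> F x ^ 1" using f k by (intro power_decreasing) auto
    have "Sx (F x) \<le> F x" using Sx_bounds f by auto
    then have "l * Sx (F x) \<le> l * F x" using l0 by (intro mult_left_mono) auto
    then have b: "(1 - l) * F x \<le> F x - l * Sx (F x)" by (simp add: algebra_simps)
    have "(1-l) * F x ^ k \<le> (1-l) * F x" using a l1 by (intro mult_left_mono) auto
    then have "F x ^ k * (1-l) \<le> F x - l * Sx (F x)" using b by (simp add: mult.commute)
    then have "F x ^ k \<le> (F x - l * Sx (F x)) / (1-l)" using l1 by (subst pos_le_divide_eq) auto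
    then have "F x ^ k \<le> (1/(1-l)) * (F x - l * Sx (F x))" by simp
    moreover have "0 \<le> F x ^ k" using f by simp
    ultimately show "norm (F x ^ k) \<le> norm ((1/(1-l)) * (F x - l * Sx (F x)))" 
      using abs_ge_self[of "(1/(1-l)) * (F x - l * Sx (F x))"] unfolding real_norm_def by linarith
  qed
qed

lemma mw_eq: "set_integrable lborel {0..} (\<lambda>w. Sx (F w)) \<and>
   mean_wait n p d F = (LINT w:{0..}|lborel. Sx (F w))"
proof -
  have ii: "\<And>i. i \<in> {..<n} \<Longrightarrow> integrable lborel (\<lambda>w. p i * (indicator {0..} w *\<^sub>R F w ^ d i))"
    using Fk_int d_pos unfolding set_integrable_def by auto
  have eq: "(\<lambda>w. indicator {0..} w *\<^sub>R Sx (F w)) = (\<lambda>w. \<Sum>i<n. p i * (indicator {0..} w *\<^sub>R F w ^ d i))"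
    unfolding Sx_def by (auto simp: sum_distrib_left algebra_simps)
  have "set_integrable lborel {0..} (\<lambda>w. Sx (F w))"
    unfolding set_integrable_def eq using ii by auto
  moreover have "mean_wait n p d F = (LINT w:{0..}|lborel. Sx (F w))"
    unfolding mean_wait_def set_lebesgue_integral_def eq
    by (subst Bochner_Integration.integral_sum[OF ii]) auto
  ultimately show ?thesis by simp
qed

lemma R0: "Ax l \<le> mean_wait n p d F \<and> mean_wait n p d F \<le> Ax l / (1 - l)"
proof -
  have Si: "set_integrable lborel {0..} (\<lambda>w. Sx (F w))" and mw: "mean_wait n p d F = (LINT w:{0..}|lborel. Sx (F w))"
    using mw_eq by auto
  have pt: "\<And>w. w \<in> {0..} \<Longrightarrow> Sx (F w) * (1 - l * Hx (F w)) \<le> Sx (F w) \<and>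
       Sx (F w) \<le> (1/(1-l)) * (Sx (F w) * (1 - l * Hx (F w)))"
  proof -
    fix w :: real assume "w \<in> {0..}"
    then have f: "0 < F w" "F w < 1" using Fw by auto
    then have s: "0 \<le> Sx (F w)" and h: "0 \<le> Hx (F w)" "Hx (F w) \<le> 1" using Sx_bounds Hx_bounds by auto
    have lh: "0 \<le> l * Hx (F w)" using h l0 by simp
    have lh2: "l * Hx (F w) \<le> l" using h l0 by (simp add: mult_left_le)
    have a: "Sx (F w) * (1 - l * Hx (F w)) \<le> Sx (F w)" using s lh by (simp add: mult_left_le)
    have "Sx (F w) * (1 - l) \<le> Sx (F w) * (1 - l * Hx (F w))"
      by (rule mult_left_mono) (use s lh2 in auto)
    then have "(1 - l) * Sx (F w) \<le> Sx (F w) * (1 - l * Hx (F w))" by (simp add: mult.commute)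
    then have "Sx (F w) \<le> (1/(1-l)) * (Sx (F w) * (1 - l * Hx (F w)))"
      using l1 by (simp add: field_simps)
    with a show "?thesis w" by simp
  qed
  have "Ax l = (LINT w:{0..}|lborel. Sx (F w) * (1 - l * Hx (F w)))" using I2 by simp
  also have "\<dots> \<le> (LINT w:{0..}|lborel. Sx (F w))"
    using I2 Si pt by (intro set_integral_mono) auto
  finally have 1: "Ax l \<le> mean_wait n p d F" using mw by simp
  have "(LINT w:{0..}|lborel. Sx (F w)) \<le> (LINT w:{0..}|lborel. (1/(1-l)) * (Sx (F w) * (1 - l * Hx (F w))))"
    using I2 Si pt by (intro set_integral_mono) auto
  also have "\<dots> = Ax l / (1 - l)" using I2 by simp
  finally show ?thesis using 1 mw by simp
qed

end


context LL begin

lemma sum_dm1: "(\<Sum>i<n. p i * real (d i - 1)) = mm n p d - 1"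
proof -
  have "(\<Sum>i<n. p i * real (d i - 1)) = (\<Sum>i<n. p i * real (d i) - p i)"
    using d_pos by (intro sum.cong) (auto simp: of_nat_diff algebra_simps)
  also have "\<dots> = mm n p d - 1" unfolding mm_def using p_sum by (simp add: sum_subtractf)
  finally show ?thesis .
qed

lemma P1: assumes m: "mm n p d > 1" and x: "0 \<le> x" "x \<le> 1"
  shows "\<bar>Sx x - Px x / (mm n p d - 1)\<bar> \<le> KK n p d * (x * (1 - x))"
proof -
  define M where "M = mm n p d - 1"
  have M: "M > 0" using m M_def by simp
  define c where "c i = real (d i - 1) / M" for i
  have pc: "(\<Sum>i<n. p i * c i) = 1" unfolding c_def using sum_dm1 M M_def
    by (simp add: sum_divide_distrib[symmetric] mult.assoc[symmetric] times_divide_eq_right)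
  have "(\<Sum>i<n. p i * ((x ^ d i - x) - c i * (x ^ (d i - 1) - x)))
      = Sx x - x * (\<Sum>i<n. p i) - (\<Sum>i<n. p i * (c i * x ^ (d i - 1))) + x * (\<Sum>i<n. p i * c i)"
    unfolding Sx_def by (simp add: sum_subtractf sum.distrib sum_distrib_left algebra_simps)
  also have "(\<Sum>i<n. p i * (c i * x ^ (d i - 1))) = Px x / M"
    unfolding Px_def c_def by (simp add: sum_divide_distrib algebra_simps)
  finally have eq: "Sx x - Px x / M = (\<Sum>i<n. p i * ((x ^ d i - x) - c i * (x ^ (d i - 1) - x)))"
    using pc p_sum by simp
  have "\<bar>Sx x - Px x / M\<bar> \<le> (\<Sum>i<n. \<bar>p i * ((x ^ d i - x) - c i * (x ^ (d i - 1) - x))\<bar>)"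
    unfolding eq by (rule sum_abs)
  also have "\<dots> \<le> (\<Sum>i<n. p i * ((real (d i) + c i * real (d i)) * x * (1 - x)))"
  proof (rule sum_mono)
    fix i assume i: "i \<in> {..<n}"
    have c0: "0 \<le> c i" unfolding c_def using M by simp
    have c1: "d i = 1 \<Longrightarrow> c i = 0" unfolding c_def by simp
    have "\<bar>(x ^ d i - x) - c i * (x ^ (d i - 1) - x)\<bar> \<le> (real (d i) + c i * real (d i)) * x * (1 - x)"
      using term_bound[OF x _ c0 c1] d_pos i by auto
    then have "p i * \<bar>(x ^ d i - x) - c i * (x ^ (d i - 1) - x)\<bar> \<le> p i * ((real (d i) + c i * real (d i)) * x * (1 - x))"
      using p_nonneg i by (intro mult_left_mono) auto
    then show "\<bar>p i * ((x ^ d i - x) - c i * (x ^ (d i - 1) - x))\<bar> \<le> p i * ((real (d i) + c i * real (d i)) * x * (1 - x))"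
      using p_nonneg i by (simp add: abs_mult)
  qed
  also have "\<dots> = (\<Sum>i<n. p i * (real (d i) + c i * real (d i))) * (x * (1 - x))"
    unfolding sum_distrib_right by (rule sum.cong) (auto simp: algebra_simps)
  also have "(\<Sum>i<n. p i * (real (d i) + c i * real (d i))) = KK n p d"
    unfolding KK_def c_def M_def by simp
  finally show ?thesis unfolding M_def .
qed

lemma P2: assumes x: "0 \<le> x" "x \<le> 1"
  shows "kap n p d * (x * (1 - x)) \<le> x - Sx x"
proof -
  have "kap n p d * (x * (1 - x)) = (\<Sum>i<n. p i * ((1 - 0 ^ (d i - 1)) * (x * (1 - x))))"
    unfolding kap_def sum_distrib_right by (simp add: mult.assoc)
  also have "\<dots> \<le> (\<Sum>i<n. p i * (x - x ^ d i))"
    using kappa_term[OF x] d_pos p_nonneg by (intro sum_mono mult_left_mono) auto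
  also have "\<dots> = x - Sx x" unfolding Sx_def using p_sum
    by (simp add: sum_subtractf right_diff_distrib sum_distrib_left[symmetric] sum_distrib_right[symmetric])
  finally show ?thesis .
qed

lemma R1: assumes m: "mm n p d > 1" and k: "kap n p d > 0"
  shows "\<bar>mean_wait n p d F - (ln (1 - l * Hx 0) - ln (1 - Sx l)) / (l * (mm n p d - 1))\<bar>
     \<le> KK n p d * l / kap n p d"
proof -
  define c where "c = 1 / (l * (mm n p d - 1))"
  define K where "K = KK n p d / kap n p d"
  have Si: "set_integrable lborel {0..} (\<lambda>w. Sx (F w))" and mw: "mean_wait n p d F = (LINT w:{0..}|lborel. Sx (F w))"
    using mw_eq by auto
  have i1: "set_integrable lborel {0..} (\<lambda>w. F w - l * Sx (F w))" and v1: "(LINT w:{0..}|lborel. F w - l * Sx (F w)) = l"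
    using I1 by auto
  have i3: "set_integrable lborel {0..} (\<lambda>w. l * Px (F w))" and v3: "(LINT w:{0..}|lborel. l * Px (F w)) = ln (1 - l * Hx 0) - ln (1 - Sx l)"
    using I3 by auto
  have i3': "set_integrable lborel {0..} (\<lambda>w. c * (l * Px (F w)))" using i3 by simp
  have i1': "set_integrable lborel {0..} (\<lambda>w. K * (F w - l * Sx (F w)))" using i1 by simp
  have pt: "\<bar>Sx (F w) - c * (l * Px (F w))\<bar> \<le> K * (F w - l * Sx (F w))" if w: "w \<in> {0..}" for w
  proof -
    have f: "0 \<le> F w" "F w \<le> 1" using Fw w by (auto simp: less_imp_le)
    have KK0: "0 \<le> KK n p d" "0 \<le> K"
    proof -
      show "0 \<le> KK n p d" unfolding KK_def using p_nonneg m
        by (intro sum_nonneg mult_nonneg_nonneg add_nonneg_nonneg divide_nonneg_nonneg) auto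
      then show "0 \<le> K" unfolding K_def using k by simp
    qed
    have "c * (l * Px (F w)) = Px (F w) / (mm n p d - 1)" unfolding c_def using l0 by simp
    then have "\<bar>Sx (F w) - c * (l * Px (F w))\<bar> \<le> KK n p d * (F w * (1 - F w))" using P1[OF m f] by simp
    also have "\<dots> = K * (kap n p d * (F w * (1 - F w)))" unfolding K_def using k by simp
    also have "\<dots> \<le> K * (F w - Sx (F w))" using P2[OF f] KK0 by (intro mult_left_mono) auto
    also have "\<dots> \<le> K * (F w - l * Sx (F w))"
    proof -
      have "0 \<le> Sx (F w)" using Sx_bounds f by auto
      then have "l * Sx (F w) \<le> Sx (F w)" using l1 by (simp add: mult_left_le_one_le l0 less_imp_le)
      then show ?thesis using KK0 by (intro mult_left_mono) auto
    qed
    finally show ?thesis .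
  qed
  have up: "(LINT w:{0..}|lborel. Sx (F w)) \<le> (LINT w:{0..}|lborel. c * (l * Px (F w)) + K * (F w - l * Sx (F w)))"
    using pt by (intro set_integral_mono Si set_integral_add(1) i3' i1') (smt (verit))
  have lo: "(LINT w:{0..}|lborel. c * (l * Px (F w)) - K * (F w - l * Sx (F w))) \<le> (LINT w:{0..}|lborel. Sx (F w))"
    using pt by (intro set_integral_mono Si set_integral_diff(1) i3' i1') (smt (verit))
  have "(LINT w:{0..}|lborel. c * (l * Px (F w)) + K * (F w - l * Sx (F w))) = c * (ln (1 - l * Hx 0) - ln (1 - Sx l)) + K * l"
    using set_integral_add(2)[OF i3' i1'] v1 v3 by simp
  moreover have "(LINT w:{0..}|lborel. c * (l * Px (F w)) - K * (F w - l * Sx (F w))) = c * (ln (1 - l * Hx 0) - ln (1 - Sx l)) - K * l"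
    using set_integral_diff(2)[OF i3' i1'] v1 v3 by simp
  ultimately have "\<bar>mean_wait n p d F - c * (ln (1 - l * Hx 0) - ln (1 - Sx l))\<bar> \<le> K * l"
    using up lo mw by linarith
  then show ?thesis unfolding c_def K_def by simp
qed

end


lemma glob:
  fixes n :: nat and p :: "nat \<Rightarrow> real" and d :: "nat \<Rightarrow> nat"
    and F :: "real \<Rightarrow> real \<Rightarrow> real"
  assumes p_nonneg: "\<And>i. i < n \<Longrightarrow> p i \<ge> 0"
    and p_sum: "(\<Sum>i<n. p i) = 1"
    and d_pos: "\<And>i. i < n \<Longrightarrow> d i \<ge> 1"
    and F_init: "\<And>l. 0 < l \<Longrightarrow> l < 1 \<Longrightarrow> F l 0 = l"
    and F_ode: "\<And>l w. 0 < l \<Longrightarrow> l < 1 \<Longrightarrow> 0 \<le> w \<Longrightarrow>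
        (F l has_real_derivative (l * (\<Sum>i<n. p i * F l w ^ d i) - F l w)) (at w within {0..})"
    and l: "0 < l" "l < 1"
  shows "(\<Sum>i<n. p i * l ^ d i / real (d i)) \<le> mean_wait n p d (F l)"
    "mean_wait n p d (F l) \<le> (\<Sum>i<n. p i * l ^ d i / real (d i)) / (1 - l)"
    "mm n p d > 1 \<Longrightarrow> kap n p d > 0 \<Longrightarrow>
     \<bar>mean_wait n p d (F l) - (ln (1 - l * (\<Sum>i<n. p i * 0 ^ (d i - 1))) - ln (p_idle n p d l)) / (l * (mm n p d - 1))\<bar>
     \<le> KK n p d * l / kap n p d"
proof -
  interpret LL n p d l "F l"
    by unfold_locales (use assms in auto)
  show "(\<Sum>i<n. p i * l ^ d i / real (d i)) \<le> mean_wait n p d (F l)"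
    "mean_wait n p d (F l) \<le> (\<Sum>i<n. p i * l ^ d i / real (d i)) / (1 - l)"
    using R0 unfolding Ax_def by auto
  assume "mm n p d > 1" "kap n p d > 0"
  from R1[OF this] show "\<bar>mean_wait n p d (F l) - (ln (1 - l * (\<Sum>i<n. p i * 0 ^ (d i - 1))) - ln (p_idle n p d l)) / (l * (mm n p d - 1))\<bar>
     \<le> KK n p d * l / kap n p d"
    unfolding Hx_def Sx_def p_idle_def by simp
qed



lemma first_pos_props:
  fixes p :: "nat \<Rightarrow> real"
  assumes p_nonneg: "\<And>i. i < n \<Longrightarrow> p i \<ge> 0" and p_sum: "(\<Sum>i<n. p i) = 1"
  shows "first_pos n p < n" "p (first_pos n p) > 0" "\<And>i. i < first_pos n p \<Longrightarrow> p i = 0"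
proof -
  define S where "S = {i. i < n \<and> p i > 0}"
  have fin: "finite S" unfolding S_def by auto
  have ne: "S \<noteq> {}"
  proof
    assume "S = {}"
    then have "\<And>i. i < n \<Longrightarrow> p i = 0" using p_nonneg unfolding S_def by force
    then have "(\<Sum>i<n. p i) = 0" by simp
    then show False using p_sum by simp
  qed
  have j: "first_pos n p \<in> S" unfolding first_pos_def S_def[symmetric] using fin ne by (rule Min_in)
  then show "first_pos n p < n" "p (first_pos n p) > 0" unfolding S_def by auto
  fix i assume i: "i < first_pos n p"
  have "i \<notin> S"
  proof
    assume "i \<in> S"
    then have "first_pos n p \<le> i" unfolding first_pos_def S_def[symmetric] using fin by simp
    then show False using i by simp
  qed
  then show "p i = 0" using i \<open>first_pos n p < n\<close> p_nonneg[of i] unfolding S_def by auto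
qed

lemma lim0:
  fixes n :: nat and p :: "nat \<Rightarrow> real" and d :: "nat \<Rightarrow> nat" and E :: "real \<Rightarrow> real"
  assumes p_nonneg: "\<And>i. i < n \<Longrightarrow> p i \<ge> 0"
    and p_sum: "(\<Sum>i<n. p i) = 1"
    and d_pos: "\<And>i. i < n \<Longrightarrow> d i \<ge> 1"
    and d_mono: "\<And>i k. i < k \<Longrightarrow> k < n \<Longrightarrow> d i < d k"
    and bnd: "\<And>l. 0 < l \<Longrightarrow> l < 1 \<Longrightarrow> (\<Sum>i<n. p i * l ^ d i / real (d i)) \<le> E l \<and>
                E l \<le> (\<Sum>i<n. p i * l ^ d i / real (d i)) / (1 - l)"
  shows "((\<lambda>l. - E l / ln (p_idle n p d l)) \<longlongrightarrow> 1 / real (d (first_pos n p))) (at_right 0)"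
proof -
  define j where "j = first_pos n p"
  note fp = first_pos_props[of n p, OF p_nonneg p_sum]
  have j1: "j < n" unfolding j_def using fp(1) by simp
  have j2: "p j > 0" unfolding j_def using fp(2) by simp
  have j3: "p i = 0" if "i < j" for i using fp(3)[of i] that unfolding j_def by simp
  note j = j1 j2 j3
  define A where "A l = (\<Sum>i<n. p i * l ^ d i / real (d i))" for l :: real
  define B where "B l = (\<Sum>i<n. p i * l ^ d i)" for l :: real
  define \<alpha> where "\<alpha> l = (\<Sum>i<n. (p i / real (d i)) * l ^ (d i - d j))" for l :: real
  define \<beta> where "\<beta> l = (\<Sum>i<n. p i * l ^ (d i - d j))" for l :: real
  have pw: "p i * l ^ d i = l ^ d j * (p i * l ^ (d i - d j))" if i: "i < n" for i and l :: real
  proof (cases "i < j")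
    case True then show ?thesis using j by simp
  next
    case False
    then have "d j \<le> d i" using d_mono[of j i] i by (cases "i = j") auto
    then have "l ^ d i = l ^ d j * l ^ (d i - d j)" by (simp add: power_add[symmetric])
    then show ?thesis by simp
  qed
  have AB: "A l = l ^ d j * \<alpha> l" "B l = l ^ d j * \<beta> l" for l :: real
  proof -
    show "A l = l ^ d j * \<alpha> l" unfolding A_def \<alpha>_def sum_distrib_left
      by (rule sum.cong[OF refl]) (use pw in \<open>auto simp: field_simps\<close>)
    show "B l = l ^ d j * \<beta> l" unfolding B_def \<beta>_def sum_distrib_left
      by (rule sum.cong[OF refl]) (use pw in auto)
  qed
  have z: "0 ^ (d i - d j) * q = (if i = j then q else 0)" if i: "i < n" "p i \<noteq> 0" for i and q :: real
  proof -
    have "\<not> i < j" using j i by auto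
    then have "i = j \<or> d j < d i" using d_mono[of j i] i by (cases "i = j") auto
    then show ?thesis by auto
  qed
  have \<alpha>0: "\<alpha> 0 = p j / real (d j)" unfolding \<alpha>_def
  proof -
    have "(\<Sum>i<n. p i / real (d i) * 0 ^ (d i - d j)) = (\<Sum>i<n. if i = j then p j / real (d j) else 0)"
    proof (rule sum.cong[OF refl])
      fix i assume i: "i \<in> {..<n}"
      show "p i / real (d i) * 0 ^ (d i - d j) = (if i = j then p j / real (d j) else (0::real))"
        using z[of i "p i / real (d i)"] i by (cases "p i = 0") (auto simp: mult.commute)
    qed
    then show "(\<Sum>i<n. p i / real (d i) * 0 ^ (d i - d j)) = p j / real (d j)" using j by simp
  qed
  have \<beta>0: "\<beta> 0 = p j" unfolding \<beta>_def
  proof -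
    have "(\<Sum>i<n. p i * 0 ^ (d i - d j)) = (\<Sum>i<n. if i = j then p j else 0)"
    proof (rule sum.cong[OF refl])
      fix i assume i: "i \<in> {..<n}"
      show "p i * 0 ^ (d i - d j) = (if i = j then p j else (0::real))"
        using z[of i "p i"] i by (cases "p i = 0") (auto simp: mult.commute)
    qed
    then show "(\<Sum>i<n. p i * 0 ^ (d i - d j)) = p j" using j by simp
  qed
  have \<alpha>l: "(\<alpha> \<longlongrightarrow> p j / real (d j)) (at_right 0)"
    unfolding \<alpha>0[symmetric] unfolding \<alpha>_def by (intro tendsto_intros)
  have \<beta>l: "(\<beta> \<longlongrightarrow> p j) (at_right 0)"
    unfolding \<beta>0[symmetric] unfolding \<beta>_def by (intro tendsto_intros)
  have B0: "(B \<longlongrightarrow> 0) (at_right 0)"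
  proof -
    have "(B \<longlongrightarrow> B 0) (at_right 0)" unfolding B_def by (intro tendsto_intros)
    moreover have "B 0 = 0" unfolding AB using d_pos[OF j1] by simp
    ultimately show ?thesis by simp
  qed
  have lim_ab: "((\<lambda>l. \<alpha> l / \<beta> l) \<longlongrightarrow> 1 / real (d j)) (at_right 0)"
  proof -
    have "((\<lambda>l. \<alpha> l / \<beta> l) \<longlongrightarrow> (p j / real (d j)) / p j) (at_right 0)"
      using j by (intro tendsto_divide \<alpha>l \<beta>l) auto
    then show ?thesis using j by simp
  qed
  have f1: "((\<lambda>l. \<alpha> l / \<beta> l * (1 - B l)) \<longlongrightarrow> 1 / real (d j) * (1 - 0)) (at_right 0)"
    by (intro tendsto_intros lim_ab B0)
  have f2: "((\<lambda>l. \<alpha> l / \<beta> l / (1 - l)) \<longlongrightarrow> 1 / real (d j) / (1 - 0)) (at_right 0)"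
    by (intro tendsto_intros lim_ab) auto
  have ev: "eventually (\<lambda>l. \<alpha> l / \<beta> l * (1 - B l) \<le> - E l / ln (p_idle n p d l) \<and>
                            - E l / ln (p_idle n p d l) \<le> \<alpha> l / \<beta> l / (1 - l)) (at_right 0)"
  proof (rule eventually_at_rightI[of 0 1])
    fix l :: real assume "l \<in> {0<..<1}"
    then have l: "0 < l" "l < 1" by auto
    have bd: "A l \<le> E l" "E l \<le> A l / (1 - l)" using bnd[OF l] unfolding A_def by auto
    have A0: "0 \<le> A l" unfolding A_def using p_nonneg l by (intro sum_nonneg) auto
    have Bpos: "0 < B l"
    proof -
      have "p j * l ^ d j \<le> B l" unfolding B_def
        using j p_nonneg l by (intro member_le_sum[where f="\<lambda>i. p i * l ^ d i"]) auto
      moreover have "0 < p j * l ^ d j" using j l by simp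
      ultimately show ?thesis by simp
    qed
    have Bl1: "B l < 1"
    proof -
      have "B l \<le> (\<Sum>i<n. p i * l)" unfolding B_def
      proof (rule sum_mono)
        fix i assume i: "i \<in> {..<n}"
        have "l ^ d i \<le> l ^ 1" using l d_pos i by (intro power_decreasing) auto
        then show "p i * l ^ d i \<le> p i * l" using p_nonneg i by (intro mult_left_mono) auto
      qed
      also have "\<dots> = l" using p_sum by (simp add: sum_distrib_right[symmetric])
      finally show ?thesis using l by simp
    qed
    have pid: "p_idle n p d l = 1 - B l" unfolding p_idle_def B_def by simp
    define Lp where "Lp = - ln (1 - B l)"
    have L1: "B l \<le> Lp" unfolding Lp_def using ln_le_minus_one[of "1 - B l"] Bl1 by simp
    have L2: "Lp \<le> B l / (1 - B l)"
    proof -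
      have "ln (inverse (1 - B l)) \<le> inverse (1 - B l) - 1" using Bl1 by (intro ln_le_minus_one) auto
      moreover have "ln (inverse (1 - B l)) = Lp" unfolding Lp_def using Bl1 by (simp add: ln_inverse)
      moreover have "inverse (1 - B l) - 1 = B l / (1 - B l)" using Bl1 by (simp add: field_simps)
      ultimately show ?thesis by simp
    qed
    have Lpos: "0 < Lp" using L1 Bpos by simp
    have q: "- E l / ln (p_idle n p d l) = E l / Lp" unfolding pid Lp_def by simp
    have ab: "\<alpha> l / \<beta> l = A l / B l" unfolding AB using l by simp
    have "A l / B l * (1 - B l) = A l / (B l / (1 - B l))" using Bl1 by simp
    also have "\<dots> \<le> A l / Lp" using L2 Lpos A0 Bpos Bl1 by (intro divide_left_mono) auto
    also have "\<dots> \<le> E l / Lp" using bd Lpos by (intro divide_right_mono) auto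
    finally have lo: "A l / B l * (1 - B l) \<le> E l / Lp" .
    have "E l / Lp \<le> (A l / (1 - l)) / Lp" using bd Lpos by (intro divide_right_mono) auto
    also have "\<dots> \<le> (A l / (1 - l)) / B l" using L1 Bpos A0 l by (intro divide_left_mono) auto
    also have "\<dots> = A l / B l / (1 - l)" by simp
    finally have up: "E l / Lp \<le> A l / B l / (1 - l)" .
    show "\<alpha> l / \<beta> l * (1 - B l) \<le> - E l / ln (p_idle n p d l) \<and>
          - E l / ln (p_idle n p d l) \<le> \<alpha> l / \<beta> l / (1 - l)" using lo up q ab by simp
  qed simp
  have "((\<lambda>l. - E l / ln (p_idle n p d l)) \<longlongrightarrow> 1 / real (d j)) (at_right 0)"
    by (rule tendsto_sandwich[OF _ _ f1[simplified] f2[simplified]]) (use ev in \<open>auto elim: eventually_mono\<close>)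
  then show ?thesis unfolding j_def .
qed



lemma lim1:
  fixes n :: nat and p :: "nat \<Rightarrow> real" and d :: "nat \<Rightarrow> nat" and E :: "real \<Rightarrow> real"
  assumes p_nonneg: "\<And>i. i < n \<Longrightarrow> p i \<ge> 0"
    and p_sum: "(\<Sum>i<n. p i) = 1"
    and d_pos: "\<And>i. i < n \<Longrightarrow> d i \<ge> 1"
    and m: "M > 0"
    and c0: "c0 < 1"
    and bnd: "\<And>l. 0 < l \<Longrightarrow> l < 1 \<Longrightarrow>
       \<bar>E l - (ln (1 - l * c0) - ln (p_idle n p d l)) / (l * M)\<bar> \<le> C"
  shows "((\<lambda>l. - E l / ln (p_idle n p d l)) \<longlongrightarrow> 1 / M) (at_left 1)"
proof -
  define P where "P l = p_idle n p d l" for l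
  define Lp where "Lp l = - ln (P l)" for l
  have Ppos: "0 < P l" "P l < 1" if l: "0 < l" "l < 1" for l
  proof -
    have "(\<Sum>i<n. p i * l ^ d i) \<le> (\<Sum>i<n. p i * l)"
    proof (rule sum_mono)
      fix i assume i: "i \<in> {..<n}"
      have "l ^ d i \<le> l ^ 1" using l d_pos i by (intro power_decreasing) auto
      then show "p i * l ^ d i \<le> p i * l" using p_nonneg i by (intro mult_left_mono) auto
    qed
    also have "\<dots> = l" using p_sum by (simp add: sum_distrib_right[symmetric])
    finally show "0 < P l" unfolding P_def p_idle_def using l by simp
    have "\<exists>i\<in>{..<n}. 0 < p i * l ^ d i"
    proof (rule ccontr)
      assume "\<not> ?thesis"
      then have "\<And>i. i < n \<Longrightarrow> p i = 0" using p_nonneg l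
        by (metis lessThan_iff mult_pos_pos order_less_le zero_less_power)
      then show False using p_sum by simp
    qed
    then have "0 < (\<Sum>i<n. p i * l ^ d i)" using p_nonneg l
      by (intro sum_pos2[where i="SOME i. i \<in> {..<n} \<and> 0 < p i * l ^ d i"]) (auto intro: someI2_ex)
    then show "P l < 1" unfolding P_def p_idle_def by simp
  qed
  have ev: "eventually (\<lambda>l. 0 < l \<and> l < 1) (at_left (1::real))"
    by (rule eventually_at_leftI[of 0]) auto
  have P1: "(P \<longlongrightarrow> 0) (at_left 1)"
  proof -
    have "(P \<longlongrightarrow> 1 - (\<Sum>i<n. p i * 1 ^ d i)) (at_left 1)"
      unfolding P_def p_idle_def by (intro tendsto_intros)
    then show ?thesis using p_sum by simp
  qed
  have "filterlim P (at_right 0) (at_left 1)"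
    using P1 by (rule tendsto_imp_filterlim_at_right) (use ev Ppos in \<open>auto elim: eventually_mono\<close>)
  then have "filterlim (\<lambda>l. ln (P l)) at_bot (at_left 1)"
    by (rule filterlim_compose[OF ln_at_0])
  then have Lt: "filterlim Lp at_top (at_left 1)" unfolding Lp_def by (simp add: filterlim_uminus_at_bot)
  then have Li: "filterlim Lp at_infinity (at_left 1)" by (rule filterlim_at_top_imp_at_infinity)
  have lc: "((\<lambda>l. ln (1 - l * c0)) \<longlongrightarrow> ln (1 - 1 * c0)) (at_left 1)"
    using c0 by (intro tendsto_intros) auto
  define T1 where "T1 l = (ln (1 - l * c0) / Lp l + 1) / (l * M)" for l
  have T1l: "(T1 \<longlongrightarrow> (0 + 1) / (1 * M)) (at_left 1)"
    unfolding T1_def using m by (intro tendsto_intros tendsto_divide_0[OF lc Li]) auto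
  define X where "X l = ln (1 - l * c0) - ln (P l)" for l
  define T2 where "T2 l = (E l - X l / (l * M)) / Lp l" for l
  have T2l: "(T2 \<longlongrightarrow> 0) (at_left 1)"
  proof (rule Lim_null_comparison)
    show "eventually (\<lambda>l. norm (T2 l) \<le> C / Lp l) (at_left 1)"
      using ev
    proof eventually_elim
      case (elim l)
      then have Lpos: "0 < Lp l" unfolding Lp_def using Ppos[of l] by simp
      have "\<bar>E l - X l / (l * M)\<bar> \<le> C" using bnd[of l] elim unfolding X_def P_def by auto
      then show ?case unfolding T2_def using Lpos by (simp add: abs_divide divide_right_mono)
    qed
    show "((\<lambda>l. C / Lp l) \<longlongrightarrow> 0) (at_left 1)" by (rule tendsto_divide_0[OF tendsto_const Li])
  qed
  have eq: "eventually (\<lambda>l. T1 l + T2 l = - E l / ln (p_idle n p d l)) (at_left 1)"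
    using ev
  proof eventually_elim
    case (elim l)
    then have Lpos: "0 < Lp l" unfolding Lp_def using Ppos[of l] by simp
    have "T1 l = (X l / (l * M)) / Lp l"
      unfolding T1_def X_def using Lpos elim m by (simp add: Lp_def field_simps)
    then have "T1 l + T2 l = E l / Lp l" unfolding T2_def using Lpos elim m by (simp add: field_simps)
    then show ?case unfolding Lp_def P_def by simp
  qed
  have "((\<lambda>l. T1 l + T2 l) \<longlongrightarrow> (0 + 1) / (1 * M) + 0) (at_left 1)"
    by (intro tendsto_add T1l T2l)
  then have "((\<lambda>l. T1 l + T2 l) \<longlongrightarrow> 1 / M) (at_left 1)" by simp
  then show ?thesis by (rule Lim_transform_eventually) (rule eq)
qed



theorem proposition5p3:
  fixes n :: nat and p :: "nat \<Rightarrow> real" and d :: "nat \<Rightarrow> nat"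
    and F :: "real \<Rightarrow> real \<Rightarrow> real"
  assumes p_nonneg: "\<And>i. i < n \<Longrightarrow> p i \<ge> 0"
    and p_sum: "(\<Sum>i<n. p i) = 1"
    and d_pos: "\<And>i. i < n \<Longrightarrow> d i \<ge> 1"
    and d_mono: "\<And>i k. i < k \<Longrightarrow> k < n \<Longrightarrow> d i < d k"
    and mean_gt: "(\<Sum>i<n. p i * real (d i)) > 1"
    and F_init: "\<And>l. 0 < l \<Longrightarrow> l < 1 \<Longrightarrow> F l 0 = l"
    and F_ode: "\<And>l w. 0 < l \<Longrightarrow> l < 1 \<Longrightarrow> 0 \<le> w \<Longrightarrow>
        (F l has_real_derivative (l * (\<Sum>i<n. p i * F l w ^ d i) - F l w)) (at w within {0..})"
  shows "(((\<lambda>l. - mean_wait n p d (F l) / ln (p_idle n p d l))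
            \<longlongrightarrow> 1 / real (d (first_pos n p))) (at_right 0)) \<and>
         (((\<lambda>l. - mean_wait n p d (F l) / ln (p_idle n p d l))
            \<longlongrightarrow> 1 / ((\<Sum>i<n. p i * real (d i)) - 1)) (at_left 1))"
proof
  note G = glob[of n p d F, OF p_nonneg p_sum d_pos F_init F_ode]
  show "((\<lambda>l. - mean_wait n p d (F l) / ln (p_idle n p d l))
            \<longlongrightarrow> 1 / real (d (first_pos n p))) (at_right 0)"
    by (rule lim0[OF p_nonneg p_sum d_pos d_mono]) (use G(1,2) in auto)
  have m: "mm n p d > 1" using mean_gt unfolding mm_def .
  have kt: "0 \<le> p i * (1 - 0 ^ (d i - 1))" if "i < n" for i
    using p_nonneg[OF that] by (cases "d i - 1") auto
  have k: "kap n p d > 0"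
  proof (rule ccontr)
    assume "\<not> kap n p d > 0"
    then have "kap n p d = 0" using kt unfolding kap_def by (meson lessThan_iff not_less order_antisym sum_nonneg)
    then have z: "\<And>i. i < n \<Longrightarrow> p i * (1 - 0 ^ (d i - 1)) = 0"
      using kt unfolding kap_def by (subst (asm) sum_nonneg_eq_0_iff) auto
    have eqd: "\<And>i. i < n \<Longrightarrow> p i * real (d i) = p i"
    proof -
      fix i assume i: "i < n"
      show "p i * real (d i) = p i"
      proof (cases "p i = 0")
        case False
        then have "(0::real) ^ (d i - 1) = 1" using z[OF i] by simp
        then have "d i - 1 = 0" by (metis power_0_left zero_neq_one)
        then have "d i = 1" using d_pos[OF i] by simp
        then show ?thesis by simp
      qed simp
    qed
    have "mm n p d = (\<Sum>i<n. p i)" unfolding mm_def by (rule sum.cong) (auto simp: eqd)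
    then have "mm n p d = 1" using p_sum by simp
    then show False using m by simp
  qed
  have c0: "(\<Sum>i<n. p i * 0 ^ (d i - 1)) < (1::real)"
  proof -
    have "kap n p d = (\<Sum>i<n. p i) - (\<Sum>i<n. p i * 0 ^ (d i - 1))"
      unfolding kap_def by (simp add: sum_subtractf right_diff_distrib)
    then show ?thesis using k p_sum by simp
  qed
  have G3: "\<And>l. 0 < l \<Longrightarrow> l < 1 \<Longrightarrow> \<bar>mean_wait n p d (F l) - (ln (1 - l * (\<Sum>i<n. p i * 0 ^ (d i - 1))) - ln (p_idle n p d l)) / (l * (mm n p d - 1))\<bar>
       \<le> KK n p d * l / kap n p d"
    using G(3) m k by auto
  have "((\<lambda>l. - mean_wait n p d (F l) / ln (p_idle n p d l)) \<longlongrightarrow> 1 / (mm n p d - 1)) (at_left 1)"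
  proof (rule lim1[OF p_nonneg p_sum d_pos _ c0, where C="\<bar>KK n p d\<bar> / kap n p d"])
    show "0 < mm n p d - 1" using m by simp
    fix l :: real assume l: "0 < l" "l < 1"
    have "KK n p d * l \<le> \<bar>KK n p d\<bar>"
    proof -
      have "KK n p d * l \<le> \<bar>KK n p d\<bar> * l" using l by (intro mult_right_mono) auto
      also have "\<dots> \<le> \<bar>KK n p d\<bar>" using l by (simp add: mult_left_le)
      finally show ?thesis .
    qed
    then have "KK n p d * l / kap n p d \<le> \<bar>KK n p d\<bar> / kap n p d" using k by (intro divide_right_mono) auto
    then show "\<bar>mean_wait n p d (F l) - (ln (1 - l * (\<Sum>i<n. p i * 0 ^ (d i - 1))) - ln (p_idle n p d l)) / (l * (mm n p d - 1))\<bar>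
       \<le> \<bar>KK n p d\<bar> / kap n p d"
      using G3[OF l] by linarith
  qed
  then show "((\<lambda>l. - mean_wait n p d (F l) / ln (p_idle n p d l))
            \<longlongrightarrow> 1 / ((\<Sum>i<n. p i * real (d i)) - 1)) (at_left 1)"
    unfolding mm_def .
qed


end
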